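(* Let $\varepsilon>0$ with $1/\varepsilon$ an integer, let $n$ be a positive integer, and let $I$ be a set of at most $n$ items packed in a horizontal (respectively vertical) container $C$. Then for every integer $k\ge1/\varepsilon$ there is a set $I'\subseteq I$ with $p(I')\ge(1-\varepsilon)p(I)$ that can be packed in a horizontal (respectively vertical) container $C'$ with $w(C')\le w(C)$, $h(C')\le h(C)$, $w(C')\in WIDTHS(I)^{(k)}$ and $h(C')\in HEIGHTS(I)^{(k)}$.
   Context: Items are axis-parallel rectangles with width $w_i$, height $h_i$, profit $p(i)\ge0$; no rotations. A horizontal container is a box in which items are stacked one on top of another (their projections on the $y$-axis have pairwise disjoint interiors); a vertical container is a box in which items are placed side by side (their projections on the $x$-axis have pairwise disjoint interiors). $WIDTHS(I)=\{w_j: j\in I\}$, $HEIGHTS(I)=\{h_j:j\in I\}$. For a finite set $P$ of reals and integer $k\ge0$, $P^{(k)}=\{(p_1+\dots+p_l)+i\,p_{l+1}: p_1,\dots,p_{l+1}\in P,\ 0\le l\le k,\ i\in\{0,1,\dots,n\}\}$. *)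

theory Defs
  imports Complex_Main
begin

(* A packing of the item set I into a box
   of width W and height H (lower-left corner at the origin) assigns to each
   item the lower-left corner (x i, y i) of its placement. *)

definition horiz_container ::
  "('a \<Rightarrow> real) \<Rightarrow> ('a \<Rightarrow> real) \<Rightarrow> 'a set \<Rightarrow> real \<Rightarrow> real \<Rightarrow> bool" where
  "horiz_container w h I W H \<longleftrightarrow>
     (\<exists>x y :: 'a \<Rightarrow> real.
        (\<forall>i\<in>I. 0 \<le> x i \<and> x i + w i \<le> W \<and> 0 \<le> y i \<and> y i + h i \<le> H) \<and>
        (\<forall>i\<in>I. \<forall>j\<in>I. i \<noteq> j \<longrightarrow>
            {y i<..<y i + h i} \<inter> {y j<..<y j + h j} = {}))"

definition vert_container ::
  "('a \<Rightarrow> real) \<Rightarrow> ('a \<Rightarrow> real) \<Rightarrow> 'a set \<Rightarrow> real \<Rightarrow> real \<Rightarrow> bool" where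
  "vert_container w h I W H \<longleftrightarrow>
     (\<exists>x y :: 'a \<Rightarrow> real.
        (\<forall>i\<in>I. 0 \<le> x i \<and> x i + w i \<le> W \<and> 0 \<le> y i \<and> y i + h i \<le> H) \<and>
        (\<forall>i\<in>I. \<forall>j\<in>I. i \<noteq> j \<longrightarrow>
            {x i<..<x i + w i} \<inter> {x j<..<x j + w j} = {}))"

definition WIDTHS :: "('a \<Rightarrow> real) \<Rightarrow> 'a set \<Rightarrow> real set" where
  "WIDTHS w I = w ` I"

definition HEIGHTS :: "('a \<Rightarrow> real) \<Rightarrow> 'a set \<Rightarrow> real set" where
  "HEIGHTS h I = h ` I"

definition ext_set :: "real set \<Rightarrow> nat \<Rightarrow> nat \<Rightarrow> real set" where
  "ext_set P k n = {sum_list ps + real i * q | ps q i.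
       set ps \<subseteq> P \<and> length ps \<le> k \<and> q \<in> P \<and> i \<le> n}"

end

theory Submission imports Defs begin

lemma disj_order:
  fixes a b c d :: real
  assumes "b > 0" "d > 0" "{a<..<a+b} \<inter> {c<..<c+d} = {}" "c \<le> a"
  shows "c + d \<le> a"
proof (rule ccontr)
  assume A: "\<not> c + d \<le> a"
  obtain t where t: "t > 0" "t \<le> b" "t \<le> c+d-a" using assms A
    by (intro that[of "min b (c+d-a)"]) auto
  define z where "z = a + t / 2"
  have "a < z" using t unfolding z_def by linarith
  moreover have "z < a + b" using t unfolding z_def by linarith
  moreover have "c < z" using t assms(4) unfolding z_def by linarith
  moreover have "z < c + d" using t unfolding z_def by linarith
  ultimately have "z \<in> {a<..<a+b} \<inter> {c<..<c+d}" by simp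
  thus False using assms(3) by blast
qed

lemma sum_le_H:
  fixes h y :: "'a \<Rightarrow> real"
  assumes "finite J" "0 \<le> H" "\<forall>i\<in>J. h i > 0 \<and> 0 \<le> y i \<and> y i + h i \<le> H"
    "\<forall>i\<in>J. \<forall>j\<in>J. i \<noteq> j \<longrightarrow> {y i<..<y i + h i} \<inter> {y j<..<y j + h j} = {}"
  shows "sum h J \<le> H"
  using assms
proof (induction "card J" arbitrary: J H rule: less_induct)
  case less
  show ?case
  proof (cases "J = {}")
    case True thus ?thesis using less by simp
  next
    case False
    have "Max (y ` J) \<in> y ` J" using Max_in[of "y ` J"] False less(2) by auto
    then obtain a where a: "a \<in> J" "y a = Max (y ` J)" by auto
    have ya: "\<forall>j\<in>J. y j \<le> y a" using a less(2) by auto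
    have rest: "\<forall>j\<in>J-{a}. h j > 0 \<and> 0 \<le> y j \<and> y j + h j \<le> y a"
    proof
      fix j assume j: "j \<in> J - {a}"
      have "{y a<..<y a + h a} \<inter> {y j<..<y j + h j} = {}" using less(5) j a by auto
      hence "y j + h j \<le> y a" using disj_order[of "h a" "h j" "y a" "y j"] less(4) j a ya by auto
      thus "h j > 0 \<and> 0 \<le> y j \<and> y j + h j \<le> y a" using less(4) j by auto
    qed
    have "sum h (J - {a}) \<le> y a"
      apply (rule less(1)[of "J - {a}"])
      using less(2,4,5) a rest card_gt_0_iff[of J] by (auto simp: card_Diff1_less)
    moreover have "sum h J = h a + sum h (J - {a})" using a less(2) by (simp add: sum.remove)
    ultimately show ?thesis using less(4) a by force
  qed
qed

lemma stack:
  fixes h w :: "'a \<Rightarrow> real"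
  assumes "finite J" "\<forall>i\<in>J. 0 < h i \<and> w i \<le> W" "sum h J \<le> H"
  shows "horiz_container w h J W H"
  using assms
proof (induction J arbitrary: H rule: finite_induct)
  case empty thus ?case unfolding horiz_container_def by auto
next
  case (insert a J)
  have "sum h J \<le> H - h a" using insert by simp
  hence "horiz_container w h J W (H - h a)" using insert by simp
  then obtain x y where xy: "\<forall>i\<in>J. 0 \<le> x i \<and> x i + w i \<le> W \<and> 0 \<le> y i \<and> y i + h i \<le> H - h a"
    "\<forall>i\<in>J. \<forall>j\<in>J. i \<noteq> j \<longrightarrow> {y i<..<y i + h i} \<inter> {y j<..<y j + h j} = {}"
    unfolding horiz_container_def by blast
  have s0: "sum h J \<ge> 0" using insert(4) by (intro sum_nonneg) auto
  define y' where "y' = y(a := H - h a)"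
  have d1: "\<forall>j\<in>J. {y' j<..<y' j + h j} \<inter> {y' a<..<y' a + h a} = {}"
    using xy(1) insert(2) unfolding y'_def by auto
  have "\<forall>i\<in>insert a J. 0 \<le> (0::real) \<and> 0 + w i \<le> W \<and> 0 \<le> y' i \<and> y' i + h i \<le> H"
    using xy(1) insert(1,2,4,5) s0 unfolding y'_def by auto
  moreover have "\<forall>i\<in>insert a J. \<forall>j\<in>insert a J. i \<noteq> j \<longrightarrow> {y' i<..<y' i + h i} \<inter> {y' j<..<y' j + h j} = {}"
    using d1 xy(2) insert(2) unfolding y'_def
    by (auto simp: Int_commute) 
  ultimately show ?case unfolding horiz_container_def by (intro exI[of _ "\<lambda>_. 0"] exI[of _ y']) auto
qed

lemma tallest:
  fixes h :: "'a \<Rightarrow> real"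
  assumes "finite I" "m \<le> card I"
  shows "\<exists>M \<subseteq> I. card M = m \<and> (\<forall>i\<in>I-M. \<forall>j\<in>M. h i \<le> h j)"
  using assms(2)
proof (induction m)
  case 0 thus ?case by auto
next
  case (Suc m)
  then obtain M where M: "M \<subseteq> I" "card M = m" "\<forall>i\<in>I-M. \<forall>j\<in>M. h i \<le> h j" by auto
  have "I - M \<noteq> {}" using M Suc(2) by auto
  moreover have fin: "finite (I - M)" using assms(1) by auto
  ultimately have "Max (h ` (I - M)) \<in> h ` (I - M)" using Max_in[of "h ` (I-M)"] by auto
  then obtain a where a: "a \<in> I - M" "h a = Max (h ` (I - M))" by auto
  have amax: "\<forall>i\<in>I-M. h i \<le> h a" using a fin by auto
  have "card (insert a M) = Suc m" using a M finite_subset[OF M(1) assms(1)] by auto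
  moreover have "\<forall>i\<in>I - insert a M. \<forall>j\<in>insert a M. h i \<le> h j" using M(3) amax by auto
  ultimately show ?case using M(1) a by (intro exI[of _ "insert a M"]) auto
qed


lemma ext_mem:
  assumes "set ps \<subseteq> P" "length ps \<le> k" "q \<in> P" "i \<le> n" "v = sum_list ps + real i * q"
  shows "v \<in> ext_set P k n"
  unfolding ext_set_def using assms by blast

lemma list_of_set:
  fixes h :: "'a \<Rightarrow> real"
  assumes "finite T"
  shows "\<exists>xs. set xs = T \<and> length xs = card T \<and> sum_list (map h xs) = sum h T"
proof -
  obtain xs where "set xs = T" "distinct xs" using finite_distinct_list[OF assms] by auto
  thus ?thesis by (intro exI[of _ xs]) (auto simp: sum_list_distinct_conv_sum_set distinct_card)
qed

lemma horiz_main: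
  fixes \<epsilon> :: real and n :: nat and m k :: nat
    and w h p :: "'a \<Rightarrow> real" and I :: "'a set" and W H :: real
  assumes eps_pos: "\<epsilon> > 0"
    and m: "1 / \<epsilon> = real m"
    and n_pos: "n > 0"
    and fin: "finite I" and nonempty: "I \<noteq> {}" and card_le: "card I \<le> n"
    and dims: "\<forall>i\<in>I. w i > 0 \<and> h i > 0"
    and prof: "\<forall>i\<in>I. p i \<ge> 0"
    and hc: "horiz_container w h I W H"
    and k: "real k \<ge> 1 / \<epsilon>"
  shows "\<exists>I' W' H'. I' \<subseteq> I \<and> sum p I' \<ge> (1 - \<epsilon>) * sum p I \<and>
                 horiz_container w h I' W' H' \<and> W' \<le> W \<and> H' \<le> H \<and>
                 W' \<in> ext_set (WIDTHS w I) k n \<and> H' \<in> ext_set (HEIGHTS h I) k n"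
proof -
  obtain x y where xy: "\<forall>i\<in>I. 0 \<le> x i \<and> x i + w i \<le> W \<and> 0 \<le> y i \<and> y i + h i \<le> H"
    "\<forall>i\<in>I. \<forall>j\<in>I. i \<noteq> j \<longrightarrow> {y i<..<y i + h i} \<inter> {y j<..<y j + h j} = {}"
    using hc unfolding horiz_container_def by blast
  obtain i0 where i0: "i0 \<in> I" using nonempty by auto
  have H0: "0 \<le> H" using xy(1) dims i0 by force
  have Hs: "sum h I \<le> H" using sum_le_H[OF fin H0] xy dims by blast
  define W0 where "W0 = Max (w ` I)"
  have W0in: "W0 \<in> w ` I" unfolding W0_def using fin nonempty by (intro Max_in) auto
  have W0ge: "\<forall>i\<in>I. w i \<le> W0" unfolding W0_def using fin by auto
  have W0W: "W0 \<le> W" using W0in xy(1) by force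
  have W0ext: "W0 \<in> ext_set (WIDTHS w I) k n"
    by (rule ext_mem[of "[]" _ _ W0 1]) (use W0in n_pos in \<open>auto simp: WIDTHS_def\<close>)
  have pack: "horiz_container w h J W0 H'" if "J \<subseteq> I" "sum h J \<le> H'" for J H'
    using stack[of J h w W0 H'] that fin dims W0ge finite_subset by blast
  have sp0: "sum p I \<ge> 0" using prof by (intro sum_nonneg) auto
  show ?thesis
  proof (cases "card I \<le> k")
    case True
    obtain xs where xs: "set xs = I" "length xs = card I" "sum_list (map h xs) = sum h I"
      using list_of_set[OF fin] by blast
    have "sum h I \<in> ext_set (HEIGHTS h I) k n"
      by (rule ext_mem[of "map h xs" _ _ "h i0" 0]) (use xs True i0 in \<open>auto simp: HEIGHTS_def\<close>)
    moreover have "(1 - \<epsilon>) * sum p I \<le> sum p I" using mult_nonneg_nonneg[of \<epsilon> "sum p I"] eps_pos sp0 by (simp add: algebra_simps)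
    ultimately show ?thesis using pack[of I "sum h I"] W0W W0ext Hs by blast
  next
    case False
    have mpos: "m > 0" using m eps_pos by (metis divide_pos_pos of_nat_0_less_iff zero_less_one)
    have mk: "m \<le> k" using m k by simp
    hence mI: "m \<le> card I" using False by simp
    obtain M where M: "M \<subseteq> I" "card M = m" "\<forall>i\<in>I-M. \<forall>j\<in>M. h i \<le> h j"
      using tallest[OF fin mI] by blast
    have finM: "finite M" using M(1) fin finite_subset by blast
    have Mne: "M \<noteq> {}" using M(2) mpos by auto
    have "Min (p ` M) \<in> p ` M" using finM Mne by (intro Min_in) auto
    then obtain r where r: "r \<in> M" "p r = Min (p ` M)" by auto
    have rmin: "\<forall>j\<in>M. p r \<le> p j" using r finM by auto
    have "real (card M) * p r \<le> sum p M" using sum_bounded_below[of M "p r" p] rmin by auto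
    also have "\<dots> \<le> sum p I" using sum_mono2[OF fin M(1)] prof M(1) by auto
    finally have "real m * p r \<le> sum p I" using M(2) by simp
    hence "p r \<le> sum p I / real m" using mpos by (simp add: field_simps)
    moreover have e: "\<epsilon> = 1 / real m" using m by (metis divide_divide_eq_right div_by_1 divide_self_if eps_pos less_irrefl mult_1)
    ultimately have pr: "p r \<le> \<epsilon> * sum p I" by simp
    have rI: "r \<in> I" using r M by auto
    define T where "T = M - {r}"
    define R where "R = I - M"
    have finT: "finite T" "finite R" unfolding T_def R_def using finM fin by auto
    have hr: "h r > 0" using dims rI by auto
    define S where "S = sum h R"
    have S0: "S \<ge> 0" unfolding S_def using dims R_def by (intro sum_nonneg) auto
    have SR: "S \<le> real (card R) * h r" unfolding S_def
      using sum_bounded_above[of R h "h r"] M(3) r unfolding R_def by auto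
    define xx where "xx = (h r + S) / h r"
    define c where "c = nat \<lfloor>xx\<rfloor>"
    have xx1: "xx \<ge> 1" unfolding xx_def using hr S0 by (simp add: field_simps)
    have cx: "real c = of_int \<lfloor>xx\<rfloor>" unfolding c_def using xx1 by simp
    have c1: "real c \<le> xx" "real c > xx - 1" using cx by linarith+
    have "real c * h r \<le> xx * h r" using c1 hr by (simp add: mult_right_mono)
    hence c2: "real c * h r \<le> h r + S" unfolding xx_def using hr by simp
    have "(xx - 1) * h r < real c * h r" using c1 hr by (simp add: mult_strict_right_mono)
    hence c3: "S < real c * h r" unfolding xx_def using hr by (simp add: field_simps)
    have "xx \<le> 1 + real (card R)" unfolding xx_def using hr SR by (simp add: field_simps)
    hence "real c \<le> 1 + real (card R)" using c1 by linarith
    moreover have "card (insert r R) \<le> card I"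
      using rI fin unfolding R_def by (intro card_mono) auto
    moreover have "r \<notin> R" unfolding R_def using r by auto
    ultimately have cn: "c \<le> n" using card_le finT(2) by simp
    define H' where "H' = sum h T + real c * h r"
    define I' where "I' = I - {r}"
    have I'TR: "I' = T \<union> R" "T \<inter> R = {}" unfolding I'_def T_def R_def using M(1) r by auto
    have sI': "sum h I' = sum h T + S" unfolding S_def I'TR(1) using sum.union_disjoint[OF finT I'TR(2)] by simp
    have IrTR: "I = insert r (T \<union> R)" "r \<notin> T \<union> R" unfolding T_def R_def using M(1) r by auto
    have sI: "sum h I = h r + sum h T + S"
      unfolding S_def using IrTR sum.union_disjoint[OF finT I'TR(2)] finT
      by (metis (no_types, lifting) ab_semigroup_add_class.add_ac(1) finite_UnI sum.insert)
    have H'le: "H' \<le> H" using sI Hs c2 unfolding H'_def by linarith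
    have H'ge: "sum h I' \<le> H'" using sI' c3 unfolding H'_def by linarith
    obtain xs where xs: "set xs = T" "length xs = card T" "sum_list (map h xs) = sum h T"
      using list_of_set[OF finT(1)] by blast
    have cT: "card T \<le> k" unfolding T_def using M(2) r finM mk by simp
    have "H' \<in> ext_set (HEIGHTS h I) k n"
      by (rule ext_mem[of "map h xs" _ _ "h r" c]) (use xs cT cn rI M(1) in \<open>auto simp: HEIGHTS_def H'_def T_def\<close>)
    moreover have "sum p I' \<ge> (1 - \<epsilon>) * sum p I"
      unfolding I'_def using sum.remove[OF fin rI, of p] pr by (simp add: algebra_simps)
    moreover have "I' \<subseteq> I" unfolding I'_def by auto
    ultimately show ?thesis using pack[OF _ H'ge] H'le W0W W0ext by blast
  qed
qed

lemma vert_swap: "vert_container w h J A B \<longleftrightarrow> horiz_container h w J B A"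
  unfolding vert_container_def horiz_container_def
proof
  assume "\<exists>x y. (\<forall>i\<in>J. 0 \<le> x i \<and> x i + w i \<le> A \<and> 0 \<le> y i \<and> y i + h i \<le> B) \<and>
      (\<forall>i\<in>J. \<forall>j\<in>J. i \<noteq> j \<longrightarrow> {x i<..<x i + w i} \<inter> {x j<..<x j + w j} = {})"
  then obtain x y where "(\<forall>i\<in>J. 0 \<le> x i \<and> x i + w i \<le> A \<and> 0 \<le> y i \<and> y i + h i \<le> B) \<and>
      (\<forall>i\<in>J. \<forall>j\<in>J. i \<noteq> j \<longrightarrow> {x i<..<x i + w i} \<inter> {x j<..<x j + w j} = {})" by blast
  thus "\<exists>x y. (\<forall>i\<in>J. 0 \<le> x i \<and> x i + h i \<le> B \<and> 0 \<le> y i \<and> y i + w i \<le> A) \<and>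
      (\<forall>i\<in>J. \<forall>j\<in>J. i \<noteq> j \<longrightarrow> {y i<..<y i + w i} \<inter> {y j<..<y j + w j} = {})"
    by (intro exI[of _ y] exI[of _ x]) blast
next
  assume "\<exists>x y. (\<forall>i\<in>J. 0 \<le> x i \<and> x i + h i \<le> B \<and> 0 \<le> y i \<and> y i + w i \<le> A) \<and>
      (\<forall>i\<in>J. \<forall>j\<in>J. i \<noteq> j \<longrightarrow> {y i<..<y i + w i} \<inter> {y j<..<y j + w j} = {})"
  then obtain x y where "(\<forall>i\<in>J. 0 \<le> x i \<and> x i + h i \<le> B \<and> 0 \<le> y i \<and> y i + w i \<le> A) \<and>
      (\<forall>i\<in>J. \<forall>j\<in>J. i \<noteq> j \<longrightarrow> {y i<..<y i + w i} \<inter> {y j<..<y j + w j} = {})" by blast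
  thus "\<exists>x y. (\<forall>i\<in>J. 0 \<le> x i \<and> x i + w i \<le> A \<and> 0 \<le> y i \<and> y i + h i \<le> B) \<and>
      (\<forall>i\<in>J. \<forall>j\<in>J. i \<noteq> j \<longrightarrow> {x i<..<x i + w i} \<inter> {x j<..<x j + w j} = {})"
    by (intro exI[of _ y] exI[of _ x]) blast
qed

theorem mainTheorem17:
  fixes \<epsilon> :: real and n :: nat
    and w h p :: "'a \<Rightarrow> real" and I :: "'a set" and W H :: real
  assumes eps_pos: "\<epsilon> > 0"
    and eps_int: "\<exists>m::nat. 1 / \<epsilon> = real m"
    and n_pos: "n > 0"
    and fin: "finite I" and nonempty: "I \<noteq> {}" and card_le: "card I \<le> n"
    and dims: "\<forall>i\<in>I. w i > 0 \<and> h i > 0"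
    and prof: "\<forall>i\<in>I. p i \<ge> 0"
  shows "(horiz_container w h I W H \<longrightarrow>
            (\<forall>k::nat. real k \<ge> 1 / \<epsilon> \<longrightarrow>
              (\<exists>I' W' H'. I' \<subseteq> I \<and> sum p I' \<ge> (1 - \<epsilon>) * sum p I \<and>
                 horiz_container w h I' W' H' \<and> W' \<le> W \<and> H' \<le> H \<and>
                 W' \<in> ext_set (WIDTHS w I) k n \<and> H' \<in> ext_set (HEIGHTS h I) k n)))
       \<and> (vert_container w h I W H \<longrightarrow>
            (\<forall>k::nat. real k \<ge> 1 / \<epsilon> \<longrightarrow>
              (\<exists>I' W' H'. I' \<subseteq> I \<and> sum p I' \<ge> (1 - \<epsilon>) * sum p I \<and>
                 vert_container w h I' W' H' \<and> W' \<le> W \<and> H' \<le> H \<and>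
                 W' \<in> ext_set (WIDTHS w I) k n \<and> H' \<in> ext_set (HEIGHTS h I) k n)))"
proof -
  obtain m :: nat where m: "1 / \<epsilon> = real m" using eps_int by blast
  have dims': "\<forall>i\<in>I. h i > 0 \<and> w i > 0" using dims by blast
  have B: "\<exists>I' W' H'. I' \<subseteq> I \<and> sum p I' \<ge> (1 - \<epsilon>) * sum p I \<and>
                 vert_container w h I' W' H' \<and> W' \<le> W \<and> H' \<le> H \<and>
                 W' \<in> ext_set (WIDTHS w I) k n \<and> H' \<in> ext_set (HEIGHTS h I) k n"
    if "vert_container w h I W H" "real k \<ge> 1 / \<epsilon>" for k
  proof -
    have "horiz_container h w I H W" using that(1) vert_swap by blast
    from horiz_main[OF eps_pos m n_pos fin nonempty card_le dims' prof this that(2)]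
    obtain I' W' H' where "I' \<subseteq> I" "sum p I' \<ge> (1 - \<epsilon>) * sum p I"
      "horiz_container h w I' W' H'" "W' \<le> H" "H' \<le> W"
      "W' \<in> ext_set (WIDTHS h I) k n" "H' \<in> ext_set (HEIGHTS w I) k n" by blast
    thus ?thesis using vert_swap[of w h I' H' W'] unfolding WIDTHS_def HEIGHTS_def by blast
  qed
  show ?thesis
  proof (intro conjI impI allI)
    fix k :: nat assume "horiz_container w h I W H" "real k \<ge> 1 / \<epsilon>"
    thus "\<exists>I' W' H'. I' \<subseteq> I \<and> sum p I' \<ge> (1 - \<epsilon>) * sum p I \<and>
                 horiz_container w h I' W' H' \<and> W' \<le> W \<and> H' \<le> H \<and>
                 W' \<in> ext_set (WIDTHS w I) k n \<and> H' \<in> ext_set (HEIGHTS h I) k n"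
      using horiz_main[OF eps_pos m n_pos fin nonempty card_le dims prof] by blast
  next
    fix k :: nat assume "vert_container w h I W H" "real k \<ge> 1 / \<epsilon>"
    thus "\<exists>I' W' H'. I' \<subseteq> I \<and> sum p I' \<ge> (1 - \<epsilon>) * sum p I \<and>
                 vert_container w h I' W' H' \<and> W' \<le> W \<and> H' \<le> H \<and>
                 W' \<in> ext_set (WIDTHS w I) k n \<and> H' \<in> ext_set (HEIGHTS h I) k n"
      using B by blast
  qed
qed

end
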